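(* Let $A\subseteq 2^\omega$ be $\mu$-measurable. If $\Phi(A)\neq\emptyset$ and $\Phi(A)$ has empty interior, then $\Phi(A)$ is a complete $\boldsymbol{\Pi}^0_3$ set.
   Context: $2^\omega$ is the Cantor space with the product topology; $N_s=\{x\in 2^\omega: s\subset x\}$ for finite binary $s$. $\mu$ is the coin-tossing measure on $2^\omega$ with $\mu(N_s)=2^{-\mathrm{lh}(s)}$. For measurable $A$, $\Phi(A)=\{x: \lim_{n}\mu(A\cap N_{x\restriction n})/\mu(N_{x\restriction n})=1\}$. $\boldsymbol{\Pi}^0_3$ is the class of $F_{\sigma\delta}$ sets; $X\subseteq 2^\omega$ is complete $\boldsymbol{\Pi}^0_3$ if $X\in\boldsymbol{\Pi}^0_3$ and every $\boldsymbol{\Pi}^0_3$ subset of $2^\omega$ is a continuous preimage $f^{-1}(X)$ with $f:2^\omega\to 2^\omega$ continuous (equivalently $X$ is $F_{\sigma\delta}$ but not $G_{\delta\sigma}$). *)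

theory Defs
  imports "HOL-Analysis.Analysis" "HOL-Probability.Probability"
begin

text \<open>Cantor space is the type nat \<Rightarrow> bool with its library product topology
  (bool discrete).\<close>

definition cyl :: "bool list \<Rightarrow> (nat \<Rightarrow> bool) set" where
  "cyl s = {x. \<forall>i<length s. x i = s ! i}"

definition restr :: "(nat \<Rightarrow> bool) \<Rightarrow> nat \<Rightarrow> bool list" where
  "restr x n = map x [0..<n]"

definition coin :: "(nat \<Rightarrow> bool) measure" where
  "coin = PiM UNIV (\<lambda>_. measure_pmf (bernoulli_pmf (1/2)))"

definition mu_measurable :: "(nat \<Rightarrow> bool) set \<Rightarrow> bool" where
  "mu_measurable A \<longleftrightarrow> A \<in> sets (completion coin)"

definition density_points :: "(nat \<Rightarrow> bool) set \<Rightarrow> (nat \<Rightarrow> bool) set" where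
  "density_points A = {x. (\<lambda>n. measure (completion coin) (A \<inter> cyl (restr x n))
                              / measure (completion coin) (cyl (restr x n))) \<longlonglongrightarrow> 1}"

definition Pi03 :: "(nat \<Rightarrow> bool) set \<Rightarrow> bool" where
  "Pi03 X \<longleftrightarrow> (\<exists>F :: nat \<Rightarrow> nat \<Rightarrow> (nat \<Rightarrow> bool) set.
      (\<forall>m n. closed (F m n)) \<and> X = (\<Inter>m. \<Union>n. F m n))"

definition complete_Pi03 :: "(nat \<Rightarrow> bool) set \<Rightarrow> bool" where
  "complete_Pi03 X \<longleftrightarrow> Pi03 X \<and>
     (\<forall>Y. Pi03 Y \<longrightarrow> (\<exists>f :: (nat \<Rightarrow> bool) \<Rightarrow> (nat \<Rightarrow> bool).
         continuous_on UNIV f \<and> Y = f -` X))"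

end

theory Submission
  imports Defs
begin


interpretation coinP: prob_space coin
  unfolding coin_def by (intro prob_space_PiM prob_space_measure_pmf)

lemma space_coin[simp]: "space coin = UNIV"
  by (simp add: coin_def space_PiM)

lemma sets_coin_single: "{x. x i \<in> A} \<in> sets coin"
proof -
  have "(\<lambda>x. x i) \<in> coin \<rightarrow>\<^sub>M measure_pmf (bernoulli_pmf (1/2))"
    unfolding coin_def by (rule measurable_component_singleton) simp
  hence "(\<lambda>x. x i) -` A \<inter> space coin \<in> sets coin" by (rule measurable_sets) simp
  thus ?thesis by (simp add: vimage_def)
qed

lemma cyl_eq: "cyl s = {x\<in>space coin. \<forall>i\<in>{..<length s}. x i \<in> {s!i}}"
  by (auto simp: cyl_def)

lemma cyl_sets[measurable, simp]: "cyl s \<in> sets coin"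
proof -
  have "cyl s = (\<Inter>i\<in>{..<length s}. {x. x i \<in> {s!i}}) \<inter> space coin" by (auto simp: cyl_def)
  also have "\<dots> \<in> sets coin"
    using sets_coin_single[of _ "{_}"] by (cases "length s = 0") (auto intro!: sets.finite_INT simp: sets.top[of coin, simplified])
  finally show ?thesis .
qed

lemma emeasure_cyl: "emeasure coin (cyl s) = ennreal ((1/2)^length s)"
proof -
  interpret P: product_prob_space "\<lambda>_. measure_pmf (bernoulli_pmf (1/2))" UNIV
    by unfold_locales
  have "emeasure coin (cyl s) = (\<Prod>i\<in>{..<length s}. emeasure (measure_pmf (bernoulli_pmf (1/2))) {s!i})"
    unfolding cyl_eq unfolding coin_def by (rule P.emeasure_PiM_Collect) auto
  also have "\<dots> = (\<Prod>i\<in>{..<length s}. ennreal (1/2))"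
  proof (rule prod.cong)
    fix i show "emeasure (measure_pmf (bernoulli_pmf (1/2))) {s!i} = ennreal (1/2)"
      by (cases "s!i") (simp_all add: emeasure_pmf_single)
  qed simp
  also have "\<dots> = ennreal ((1/2)^length s)" by (simp only: prod_constant card_lessThan ennreal_power)
  finally show ?thesis .
qed

lemma measure_cyl: "measure coin (cyl s) = (1/2)^length s"
  using emeasure_cyl[of s] by (simp add: coinP.emeasure_eq_measure)


lemma length_restr[simp]: "length (restr x n) = n"
  by (simp add: restr_def)

lemma nth_restr[simp]: "i < n \<Longrightarrow> restr x n ! i = x i"
  by (simp add: restr_def)

lemma mem_cyl_iff: "x \<in> cyl s \<longleftrightarrow> restr x (length s) = s"
  by (auto simp: cyl_def list_eq_iff_nth_eq)

lemma take_restr: "n \<le> m \<Longrightarrow> take n (restr x m) = restr x n"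
  by (simp add: restr_def take_map)

lemma restr_Suc: "restr x (Suc n) = restr x n @ [x n]"
  by (simp add: restr_def)

lemma self_in_cyl[simp]: "x \<in> cyl (restr x n)"
  by (simp add: cyl_def)

lemma cyl_prefix: "prefix s t \<Longrightarrow> cyl t \<subseteq> cyl s"
  by (auto simp: cyl_def prefix_def nth_append)

lemma cyl_restr_mono: "n \<le> m \<Longrightarrow> cyl (restr x m) \<subseteq> cyl (restr x n)"
  by (auto simp: cyl_def)

lemma cyl_append: "cyl (s @ [b]) = cyl s \<inter> {x. x (length s) = b}"
  by (auto simp: cyl_def nth_append less_Suc_eq)

lemma in_cyl_restr: "y \<in> cyl s \<Longrightarrow> n \<le> length s \<Longrightarrow> restr y n = take n s"
  by (metis mem_cyl_iff take_restr)

lemma det_eq: "{x. restr x n \<in> S} = (\<Union>u\<in>{u\<in>S. length u = n}. cyl u)"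
  by (auto simp: mem_cyl_iff)

lemma det_sets[measurable]: "{x. restr x n \<in> S} \<in> sets coin"
proof -
  have "finite {u::bool list. set u \<subseteq> UNIV \<and> length u = n}" by (rule finite_lists_length_eq) simp
  hence "finite {u::bool list. length u = n}" by simp
  hence "finite {u\<in>S. length u = n}" by (rule rev_finite_subset) auto
  thus ?thesis unfolding det_eq by (intro sets.finite_UN) auto
qed

lemma det_sets'[measurable]: "{x. P (restr x n)} \<in> sets coin"
  using det_sets[of n "Collect P"] by simp

lemma open_cyl: "open (cyl u)"
proof -
  have "cyl u = {f. \<forall>i\<in>{..<length u}. f (id i) \<in> {u!i}}" by (auto simp: cyl_def)
  also have "open \<dots>" by (rule product_topology_basis') (auto intro: discrete_topology_class.open_discrete)
  finally show ?thesis .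
qed

lemma open_det: "open {x. restr x n \<in> S}"
  unfolding det_eq by (auto intro!: open_UN open_cyl)

lemma closed_det: "closed {x. restr x n \<in> S}"
proof -
  have "{x. restr x n \<in> S} = - {x. restr x n \<in> - S}" by auto
  thus ?thesis using open_det[of n "-S"] by (simp add: closed_def)
qed

lemma cyl_nonempty: "\<exists>x. x \<in> cyl s"
  by (rule exI[of _ "\<lambda>i. if i < length s then s!i else False"]) (simp add: cyl_def)

lemma open_nbhd_cyl:
  assumes "open U" "x \<in> U" shows "\<exists>k. cyl (restr x k) \<subseteq> U"
proof -
  from assms obtain V where V: "finite {i. V i \<noteq> (UNIV::bool set)}" "x \<in> Pi\<^sub>E UNIV V" "Pi\<^sub>E UNIV V \<subseteq> U"
    unfolding open_fun_def openin_product_topology_alt by force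
  obtain k where k: "\<forall>i\<in>{i. V i \<noteq> UNIV}. i < k"
    using V(1) finite_nat_set_iff_bounded by blast
  have "cyl (restr x k) \<subseteq> Pi\<^sub>E UNIV V"
  proof
    fix y assume y: "y \<in> cyl (restr x k)"
    show "y \<in> Pi\<^sub>E UNIV V"
    proof (unfold PiE_UNIV_domain, rule Pi_I)
      fix i show "y i \<in> V i"
      proof (cases "i < k")
        case True
        then have "y i = x i" using y by (simp add: cyl_def)
        then show ?thesis using V(2) by auto
      next
        case False then show ?thesis using k by auto
      qed
    qed
  qed
  thus ?thesis using V(3) by blast
qed

definition w :: "(nat \<Rightarrow> bool) set \<Rightarrow> bool list \<Rightarrow> real" where
  "w E s = measure coin (E \<inter> cyl s) / measure coin (cyl s)"

lemma w_alt: "w E s = measure coin (E \<inter> cyl s) * 2 ^ length s"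
  by (simp add: w_def measure_cyl power_one_over)

lemma w_nonneg: "0 \<le> w E s"
  by (simp add: w_alt)

lemma w_le1: "E \<in> sets coin \<Longrightarrow> w E s \<le> 1"
proof -
  assume "E \<in> sets coin"
  hence "measure coin (E \<inter> cyl s) \<le> measure coin (cyl s)" by (intro coinP.finite_measure_mono) auto
  thus ?thesis by (simp add: w_def measure_cyl divide_le_eq_1)
qed

lemma cyl_split: "cyl s = cyl (s@[False]) \<union> cyl (s@[True])" "cyl (s@[False]) \<inter> cyl (s@[True]) = {}"
  unfolding cyl_append by auto

lemma measure_split:
  assumes "E \<in> sets coin"
  shows "measure coin (E \<inter> cyl s) = measure coin (E \<inter> cyl (s@[False])) + measure coin (E \<inter> cyl (s@[True]))"
proof -
  have "E \<inter> cyl s = (E \<inter> cyl (s@[False])) \<union> (E \<inter> cyl (s@[True]))" using cyl_split(1)[of s] by blast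
  moreover have "(E \<inter> cyl (s@[False])) \<inter> (E \<inter> cyl (s@[True])) = {}" using cyl_split(2)[of s] by blast
  ultimately show ?thesis using assms by (simp add: coinP.finite_measure_Union)
qed

lemma w_split: "E \<in> sets coin \<Longrightarrow> w E s = (w E (s@[False]) + w E (s@[True])) / 2"
  by (simp add: w_alt measure_split[of E s] algebra_simps)

lemma w_double: "E \<in> sets coin \<Longrightarrow> w E (s@[b]) \<le> 2 * w E s"
  using w_split[of E s] w_nonneg[of E "s@[\<not>b]"] by (cases b) auto

lemma w_compl: "E \<in> sets coin \<Longrightarrow> w (- E) s = 1 - w E s"
proof -
  assume E: "E \<in> sets coin"
  have "- E \<inter> cyl s = cyl s - (E \<inter> cyl s)" by auto
  hence "measure coin (- E \<inter> cyl s) = measure coin (cyl s) - measure coin (E \<inter> cyl s)"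
    using E by (simp add: coinP.finite_measure_Diff)
  thus ?thesis by (simp add: w_def measure_cyl diff_divide_distrib)
qed

lemma w_exists_child: "E \<in> sets coin \<Longrightarrow> \<exists>b. w E (s@[b]) \<le> w E s"
  using w_split[of E s] by (cases "w E (s@[False]) \<le> w E s") (auto intro: exI[of _ True])


lemma cyl_meas_pos: "measure coin (cyl s) > 0"
  by (simp add: measure_cyl)

definition bad :: "(nat \<Rightarrow> bool) set \<Rightarrow> real \<Rightarrow> bool list \<Rightarrow> nat \<Rightarrow> (nat \<Rightarrow> bool) set" where
  "bad E l t L = {y \<in> cyl t. \<exists>n. length t \<le> n \<and> n \<le> L \<and> w E (restr y n) > l}"

lemma bad_sets[measurable]: "bad E l t L \<in> sets coin"
proof -
  have "bad E l t L = cyl t \<inter> (\<Union>n\<in>{length t..L}. {y. restr y n \<in> {u. w E u > l}})"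
    by (auto simp: bad_def)
  also have "\<dots> \<in> sets coin" by (intro sets.Int sets.finite_UN) auto
  finally show ?thesis .
qed

lemma maxineq_fin:
  assumes E: "E \<in> sets coin" and l: "l > 0"
  shows "length t \<le> L \<Longrightarrow> l * measure coin (bad E l t L) \<le> measure coin (E \<inter> cyl t)"
proof (induction "L - length t" arbitrary: t)
  case 0
  hence len: "length t = L" by simp
  show ?case
  proof (cases "w E t > l")
    case True
    hence "bad E l t L = cyl t" using len by (auto simp: bad_def mem_cyl_iff)
    moreover have "l * measure coin (cyl t) \<le> measure coin (E \<inter> cyl t)"
      using True cyl_meas_pos[of t] by (simp add: w_def less_divide_eq)
    ultimately show ?thesis by simp
  next
    case False
    hence "bad E l t L = {}" using len by (auto simp: bad_def mem_cyl_iff)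
    thus ?thesis by simp
  qed
next
  case (Suc d)
  show ?case
  proof (cases "w E t > l")
    case True
    hence "bad E l t L = cyl t" using Suc.prems by (auto simp: bad_def mem_cyl_iff)
    moreover have "l * measure coin (cyl t) \<le> measure coin (E \<inter> cyl t)"
      using True cyl_meas_pos[of t] by (simp add: w_def less_divide_eq)
    ultimately show ?thesis by simp
  next
    case False
    have eq: "bad E l t L = bad E l (t@[False]) L \<union> bad E l (t@[True]) L"
    proof (intro equalityI subsetI)
      fix y assume y: "y \<in> bad E l t L"
      then obtain n where n: "y \<in> cyl t" "length t \<le> n" "n \<le> L" "w E (restr y n) > l"
        by (auto simp: bad_def)
      have "n \<noteq> length t" using n(1,4) False by (auto simp: mem_cyl_iff)
      hence "length (t@[y (length t)]) \<le> n" using n(2) by simp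
      moreover have "y \<in> cyl (t@[y (length t)])" using n(1) by (simp add: cyl_append)
      ultimately have "y \<in> bad E l (t@[y (length t)]) L" using n by (auto simp: bad_def)
      thus "y \<in> bad E l (t@[False]) L \<union> bad E l (t@[True]) L" by (cases "y (length t)") auto
    next
      fix y assume "y \<in> bad E l (t@[False]) L \<union> bad E l (t@[True]) L"
      then obtain b where "y \<in> bad E l (t@[b]) L" by blast
      thus "y \<in> bad E l t L" by (fastforce simp: bad_def cyl_append dest: Suc_leD)
    qed
    have disj: "bad E l (t@[False]) L \<inter> bad E l (t@[True]) L = {}"
      using cyl_split(2)[of t] by (auto simp: bad_def)
    have "measure coin (bad E l t L) = measure coin (bad E l (t@[False]) L) + measure coin (bad E l (t@[True]) L)"
      unfolding eq using disj by (simp add: coinP.finite_measure_Union)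
    moreover have "l * measure coin (bad E l (t@[b]) L) \<le> measure coin (E \<inter> cyl (t@[b]))" for b
      using Suc by simp
    ultimately show ?thesis using measure_split[OF E, of t] by (simp add: algebra_simps add_mono)
  qed
qed

definition badinf :: "(nat \<Rightarrow> bool) set \<Rightarrow> real \<Rightarrow> bool list \<Rightarrow> (nat \<Rightarrow> bool) set" where
  "badinf E l t = {y \<in> cyl t. \<exists>n\<ge>length t. w E (restr y n) > l}"

lemma badinf_UN: "badinf E l t = (\<Union>L. bad E l t L)"
  by (auto simp: badinf_def bad_def)

lemma badinf_sets[measurable]: "badinf E l t \<in> sets coin"
  unfolding badinf_UN by auto

lemma maxineq:
  assumes E: "E \<in> sets coin" and l: "l > 0"
  shows "l * measure coin (badinf E l t) \<le> measure coin (E \<inter> cyl t)"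
proof -
  have inc: "incseq (bad E l t)" by (auto simp: incseq_def bad_def)
  have "(\<lambda>L. measure coin (bad E l t L)) \<longlonglongrightarrow> measure coin (\<Union>L. bad E l t L)"
    using inc by (intro coinP.finite_Lim_measure_incseq) auto
  hence "(\<lambda>L. l * measure coin (bad E l t L)) \<longlonglongrightarrow> l * measure coin (badinf E l t)"
    unfolding badinf_UN by (intro tendsto_mult tendsto_const)
  thus ?thesis
    by (rule LIMSEQ_le_const2) (use maxineq_fin[OF E l] in auto)
qed


definition approx :: "(nat \<Rightarrow> bool) set \<Rightarrow> bool" where
  "approx B \<longleftrightarrow> (\<forall>e>0. \<exists>n S. measure coin ((B - {x. restr x n \<in> S}) \<union> ({x. restr x n \<in> S} - B)) < e)"

lemma sets_coin_eq: "sets coin = sigma_sets UNIV {{f. f i \<in> A} | i A. True}"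
  unfolding coin_def sets_PiM_single by simp

lemma approx_union:
  fixes A :: "nat \<Rightarrow> (nat \<Rightarrow> bool) set"
  assumes A: "\<And>i. A i \<in> sets coin" "\<And>i. approx (A i)"
  shows "approx (\<Union>i. A i)"
  unfolding approx_def
proof (intro allI impI)
  fix e :: real assume e: "e > 0"
  let ?U = "\<lambda>K. \<Union>i<K. A i"
  have inc: "incseq ?U" by (auto simp: incseq_def) (meson lessThan_iff order_less_le_trans)
  have "(\<lambda>K. measure coin (?U K)) \<longlonglongrightarrow> measure coin (\<Union>K. ?U K)"
    using inc A by (intro coinP.finite_Lim_measure_incseq) auto
  moreover have "(\<Union>K. ?U K) = (\<Union>i. A i)" by auto
  ultimately have "(\<lambda>K. measure coin (?U K)) \<longlonglongrightarrow> measure coin (\<Union>i. A i)" by simp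
  then obtain K where K: "\<bar>measure coin (?U K) - measure coin (\<Union>i. A i)\<bar> < e/2"
    using e by (auto dest!: LIMSEQ_D[of _ _ "e/2"])
  define e' where "e' = e / (2 * (real K + 1))"
  have e': "e' > 0" using e by (simp add: e'_def)
  have "\<forall>i. \<exists>nS. measure coin ((A i - {x. restr x (fst nS) \<in> snd nS}) \<union> ({x. restr x (fst nS) \<in> snd nS} - A i)) < e'"
    using A(2) e' unfolding approx_def by fastforce
  then obtain nS where nS: "\<And>i. measure coin ((A i - {x. restr x (fst (nS i)) \<in> snd (nS i)}) \<union> ({x. restr x (fst (nS i)) \<in> snd (nS i)} - A i)) < e'"
    by metis
  define n where "n i = fst (nS i)" for i
  define S where "S i = snd (nS i)" for i
  define D where "D i = {x. restr x (n i) \<in> S i}" for i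
  define N where "N = (\<Sum>i<K. n i)"
  define T where "T = {u. \<exists>i<K. take (n i) u \<in> S i}"
  have nN: "i < K \<Longrightarrow> n i \<le> N" for i unfolding N_def by (rule member_le_sum) auto
  have DT: "{x. restr x N \<in> T} = (\<Union>i<K. D i)"
    using nN by (auto simp: T_def D_def take_restr)
  let ?sd = "\<lambda>X Y. (X - Y) \<union> (Y - X)"
  have sub: "?sd (\<Union>i. A i) (\<Union>i<K. D i) \<subseteq> ((\<Union>i. A i) - ?U K) \<union> (\<Union>i<K. ?sd (A i) (D i))"
    by blast
  have Dm: "D i \<in> sets coin" for i by (simp add: D_def)
  have "measure coin (?sd (\<Union>i. A i) (\<Union>i<K. D i)) \<le> measure coin (((\<Union>i. A i) - ?U K) \<union> (\<Union>i<K. ?sd (A i) (D i)))"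
    using A Dm by (intro coinP.finite_measure_mono[OF sub]) auto
  also have "\<dots> \<le> measure coin ((\<Union>i. A i) - ?U K) + measure coin (\<Union>i<K. ?sd (A i) (D i))"
    using A Dm by (intro measure_subadditive) auto
  also have "measure coin ((\<Union>i. A i) - ?U K) = measure coin (\<Union>i. A i) - measure coin (?U K)"
    using A by (intro coinP.finite_measure_Diff) auto
  also have "measure coin (\<Union>i<K. ?sd (A i) (D i)) \<le> (\<Sum>i<K. measure coin (?sd (A i) (D i)))"
    using A Dm by (intro coinP.finite_measure_subadditive_finite) auto
  also have "\<dots> \<le> (\<Sum>i<K. e')"
    using nS by (intro sum_mono) (simp add: D_def n_def S_def less_imp_le)
  also have "\<dots> = real K * e'" by simp
  finally have "measure coin (?sd (\<Union>i. A i) (\<Union>i<K. D i)) < e/2 + real K * e'"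
    using K by linarith
  also have "real K * e' \<le> e/2" using e by (simp add: e'_def field_simps)
  finally show "\<exists>n S. measure coin (?sd (\<Union>i. A i) {x. restr x n \<in> S}) < e"
    unfolding DT[symmetric] by auto
qed

lemma approx_all_aux: "B \<in> sigma_sets UNIV {{f. f i \<in> A} | i A. True} \<Longrightarrow> approx B"
proof (induction rule: sigma_sets.induct)
  case (Basic a)
  then obtain i A where a: "a = {f. f i \<in> A}" by auto
  have "a = {x. restr x (Suc i) \<in> {u. u ! i \<in> A}}" unfolding a by simp
  thus ?case unfolding approx_def by (metis Diff_cancel Un_empty_right measure_empty)
next
  case Empty
  have "{} = {x. restr x 0 \<in> {}}" by simp
  thus ?case unfolding approx_def by (metis Diff_cancel Un_empty_right measure_empty)
next
  case (Compl a)
  show ?case unfolding approx_def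
  proof (intro allI impI)
    fix e :: real assume "e > 0"
    then obtain n S where "measure coin ((a - {x. restr x n \<in> S}) \<union> ({x. restr x n \<in> S} - a)) < e"
      using Compl.IH unfolding approx_def by blast
    moreover have "((UNIV - a) - {x. restr x n \<in> -S}) \<union> ({x. restr x n \<in> -S} - (UNIV - a))
       = (a - {x. restr x n \<in> S}) \<union> ({x. restr x n \<in> S} - a)" by auto
    ultimately show "\<exists>n S. measure coin (((UNIV - a) - {x. restr x n \<in> S}) \<union> ({x. restr x n \<in> S} - (UNIV - a))) < e"
      by metis
  qed
next
  case (Union a)
  have "a i \<in> sets coin" for i using Union.hyps sets_coin_eq by simp
  thus ?case using approx_union Union.IH by blast
qed

lemma approx_all: "B \<in> sets coin \<Longrightarrow> approx B"
  using approx_all_aux sets_coin_eq by simp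


lemma ex_inv_Suc: "(0::real) < x \<Longrightarrow> \<exists>n. inverse (real (Suc n)) < x"
  by (metis ex_inverse_of_nat_less gr0_implies_Suc)

definition dens :: "(nat \<Rightarrow> bool) set \<Rightarrow> (nat \<Rightarrow> bool) set" where
  "dens B = {x. (\<lambda>n. w B (restr x n)) \<longlonglongrightarrow> 1}"

lemma w_sub_compl:
  assumes B: "B \<in> sets coin" and C: "cyl s \<subseteq> C"
  shows "w (C - B) s = 1 - w B s"
proof -
  have "(C - B) \<inter> cyl s = (- B) \<inter> cyl s" using C by auto
  hence "w (C - B) s = w (- B) s" by (simp add: w_def)
  thus ?thesis using w_compl[OF B] by simp
qed

lemma density_step:
  assumes B: "B \<in> sets coin" and l: "l > 0" and e: "e > 0"
  shows "\<exists>M\<in>sets coin. {x\<in>B. \<forall>N. \<exists>n\<ge>N. w B (restr x n) < 1 - l} \<subseteq> M \<and> measure coin M \<le> e"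
proof -
  define e' where "e' = e * l / (l + 1)"
  have e'0: "e' > 0" using e l by (auto simp: e'_def)
  have "e' / l = e / (l+1)" using l by (simp add: e'_def)
  moreover have "e*l/(l+1) + e/(l+1) = (e*(l+1))/(l+1)" by (simp add: add_divide_distrib distrib_left)
  moreover have "(e*(l+1))/(l+1) = e" using l by simp
  ultimately have e': "e' > 0" "e' + e' / l = e" using e'0 by (simp_all add: e'_def)
  obtain n S where nS: "measure coin ((B - {x. restr x n \<in> S}) \<union> ({x. restr x n \<in> S} - B)) < e'"
    using approx_all[OF B] e' unfolding approx_def by blast
  define C where "C = {x. restr x n \<in> S}"
  define E where "E = C - B"
  have Cm: "C \<in> sets coin" and Em: "E \<in> sets coin" using B by (auto simp: C_def E_def)
  have SDm: "(B - {x. restr x n \<in> S}) \<union> ({x. restr x n \<in> S} - B) \<in> sets coin" using B by auto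
  define M where "M = (B - C) \<union> badinf E l []"
  have sub: "{x\<in>B. \<forall>N. \<exists>n\<ge>N. w B (restr x n) < 1 - l} \<subseteq> M"
  proof
    fix x assume x: "x \<in> {x\<in>B. \<forall>N. \<exists>n\<ge>N. w B (restr x n) < 1 - l}"
    show "x \<in> M"
    proof (cases "x \<in> C")
      case False thus ?thesis using x by (simp add: M_def)
    next
      case True
      obtain m where m: "m \<ge> n" "w B (restr x m) < 1 - l" using x by blast
      have "cyl (restr x m) \<subseteq> C"
      proof
        fix y assume "y \<in> cyl (restr x m)"
        hence "restr y n = restr x n" using m(1) in_cyl_restr[of y "restr x m" n] take_restr[OF m(1)] by simp
        thus "y \<in> C" using True by (simp add: C_def)
      qed
      hence "w E (restr x m) = 1 - w B (restr x m)" unfolding E_def by (rule w_sub_compl[OF B])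
      hence "w E (restr x m) > l" using m(2) by simp
      hence "x \<in> badinf E l []" by (auto simp: badinf_def cyl_def)
      thus ?thesis by (simp add: M_def)
    qed
  qed
  have "measure coin M \<le> measure coin (B - C) + measure coin (badinf E l [])"
    unfolding M_def using B Cm Em by (intro measure_subadditive) auto
  also have "measure coin (badinf E l []) \<le> measure coin E / l"
    using maxineq[OF Em l, of "[]"] l by (simp add: cyl_def field_simps)
  also have "measure coin (B - C) \<le> e'"
  proof -
    have "measure coin (B - C) \<le> measure coin ((B - C) \<union> (C - B))"
      using SDm unfolding C_def by (intro coinP.finite_measure_mono) auto
    thus ?thesis using nS unfolding C_def by simp
  qed
  also have "measure coin E \<le> e'"
  proof -
    have "measure coin E \<le> measure coin ((B - C) \<union> (C - B))"
      using SDm unfolding C_def E_def by (intro coinP.finite_measure_mono) auto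
    thus ?thesis using nS unfolding C_def by simp
  qed
  finally have "measure coin M \<le> e' + e' / l" using l by (simp add: divide_right_mono)
  thus ?thesis using e' sub M_def B Cm Em by auto
qed

lemma null_of_small:
  assumes "\<And>e. e > 0 \<Longrightarrow> \<exists>M\<in>sets coin. Z \<subseteq> M \<and> measure coin M \<le> e"
  shows "\<exists>N\<in>null_sets coin. Z \<subseteq> N"
proof -
  have "\<forall>j. \<exists>M\<in>sets coin. Z \<subseteq> M \<and> measure coin M \<le> inverse (real (Suc j))"
    using assms by simp
  then obtain M where M: "\<And>j. M j \<in> sets coin" "\<And>j. Z \<subseteq> M j" "\<And>j. measure coin (M j) \<le> inverse (real (Suc j))"
    by metis
  have Nm: "(\<Inter>j. M j) \<in> sets coin" using M(1) by auto
  have "measure coin (\<Inter>j. M j) = 0"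
  proof (rule ccontr)
    assume "measure coin (\<Inter>j. M j) \<noteq> 0"
    hence pos: "measure coin (\<Inter>j. M j) > 0" using measure_nonneg[of coin "\<Inter>j. M j"] by linarith
    then obtain j where j: "inverse (real (Suc j)) < measure coin (\<Inter>j. M j)"
      using ex_inv_Suc by blast
    have "measure coin (\<Inter>j. M j) \<le> measure coin (M j)" using M(1) by (intro coinP.finite_measure_mono) auto
    thus False using j M(3)[of j] by simp
  qed
  hence "(\<Inter>j. M j) \<in> null_sets coin" using Nm by (simp add: coinP.emeasure_eq_measure null_sets_def)
  thus ?thesis using M(2) by blast
qed

theorem lebesgue_density:
  assumes B: "B \<in> sets coin"
  shows "\<exists>N\<in>null_sets coin. B - dens B \<subseteq> N"
proof -
  define Z where "Z k = {x\<in>B. \<forall>N. \<exists>n\<ge>N. w B (restr x n) < 1 - inverse (real (Suc k))}" for k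
  have "\<forall>k. \<exists>N\<in>null_sets coin. Z k \<subseteq> N"
  proof
    fix k
    have "\<exists>M\<in>sets coin. Z k \<subseteq> M \<and> measure coin M \<le> e" if "e > 0" for e
      unfolding Z_def by (rule density_step[OF B _ that]) simp
    thus "\<exists>N\<in>null_sets coin. Z k \<subseteq> N" by (rule null_of_small)
  qed
  hence "\<exists>N. \<forall>k. N k \<in> null_sets coin \<and> Z k \<subseteq> N k" by (intro choice) blast
  then obtain N where N': "\<forall>k. N k \<in> null_sets coin \<and> Z k \<subseteq> N k" by blast
  hence N: "\<And>k. N k \<in> null_sets coin" "\<And>k. Z k \<subseteq> N k" by auto
  have "B - dens B \<subseteq> (\<Union>k. Z k)"
  proof
    fix x assume x: "x \<in> B - dens B"
    show "x \<in> (\<Union>k. Z k)"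
    proof (rule ccontr)
      assume nz: "x \<notin> (\<Union>k. Z k)"
      have ev: "\<exists>N0. \<forall>n\<ge>N0. w B (restr x n) \<ge> 1 - inverse (real (Suc k))" for k
      proof -
        have "x \<notin> Z k" using nz by blast
        hence "\<not> (\<forall>N. \<exists>n\<ge>N. w B (restr x n) < 1 - inverse (real (Suc k)))" using x by (simp add: Z_def)
        thus ?thesis by (simp add: not_less)
      qed
      have "(\<lambda>n. w B (restr x n)) \<longlonglongrightarrow> 1"
      proof (rule LIMSEQ_I)
        fix r :: real assume r: "r > 0"
        obtain k where k: "inverse (real (Suc k)) < r" using ex_inv_Suc r by blast
        obtain N0 where N0: "\<forall>n\<ge>N0. w B (restr x n) \<ge> 1 - inverse (real (Suc k))" using ev by blast
        have "\<forall>n\<ge>N0. norm (w B (restr x n) - 1) < r"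
        proof (intro allI impI)
          fix n assume "n \<ge> N0"
          hence "w B (restr x n) \<ge> 1 - inverse (real (Suc k))" using N0 by blast
          moreover have "w B (restr x n) \<le> 1" using w_le1[OF B] by blast
          ultimately have "\<bar>w B (restr x n) - 1\<bar> \<le> inverse (real (Suc k))" by linarith
          thus "norm (w B (restr x n) - 1) < r" using k by simp
        qed
        thus "\<exists>N0. \<forall>n\<ge>N0. norm (w B (restr x n) - 1) < r" by blast
      qed
      thus False using x by (simp add: dens_def)
    qed
  qed
  moreover have "(\<Union>k. N k) \<in> null_sets coin" by (rule null_sets_UN) (rule N(1))
  moreover have "(\<Union>k. Z k) \<subseteq> (\<Union>k. N k)" using N(2) by (simp add: UN_mono)
  ultimately show ?thesis by (intro bexI[of _ "\<Union>k. N k"]) auto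
qed



lemma compl_sets[measurable]: "S \<in> sets coin \<Longrightarrow> - S \<in> sets coin"
  using sets.compl_sets[of S coin] by (simp add: Compl_eq_Diff_UNIV)

lemma null_meas0: "N \<in> null_sets coin \<Longrightarrow> measure coin N = 0"
  by (simp add: measure_def null_setsD1)

lemma pos_not_null:
  assumes "X \<in> sets coin" "measure coin X > 0" "N \<in> null_sets coin"
  shows "\<exists>y\<in>X. y \<notin> N"
proof (rule ccontr)
  assume "\<not> ?thesis"
  hence "X \<subseteq> N" by blast
  hence "measure coin X \<le> measure coin N" using assms(3) by (intro coinP.finite_measure_mono) auto
  thus False using assms(2,3) by (simp add: null_meas0)
qed

lemma dens_iff_compl:
  assumes S: "S \<in> sets coin"
  shows "y \<in> dens S \<longleftrightarrow> (\<lambda>n. w (- S) (restr y n)) \<longlonglongrightarrow> 0"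
proof -
  have "(\<lambda>n. w (- S) (restr y n)) = (\<lambda>n. 1 - w S (restr y n))" using w_compl[OF S] by simp
  hence "(\<lambda>n. w (- S) (restr y n)) \<longlonglongrightarrow> 0 \<longleftrightarrow> (\<lambda>n. 1 - w S (restr y n)) \<longlonglongrightarrow> 1 - 1" by simp
  also have "\<dots> \<longleftrightarrow> (\<lambda>n. w S (restr y n)) \<longlonglongrightarrow> 1"
  proof
    assume "(\<lambda>n. 1 - w S (restr y n)) \<longlonglongrightarrow> 1 - 1"
    hence "(\<lambda>n. 1 - (1 - w S (restr y n))) \<longlonglongrightarrow> 1 - (1 - 1)" by (rule tendsto_diff[OF tendsto_const])
    moreover have "(\<lambda>n. 1 - (1 - w S (restr y n))) = (\<lambda>n. w S (restr y n))" by simp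
    ultimately show "(\<lambda>n. w S (restr y n)) \<longlonglongrightarrow> 1" by simp
  qed (intro tendsto_diff tendsto_const)
  finally show ?thesis by (simp add: dens_def)
qed

lemma dip_exists:
  assumes S: "S \<in> sets coin" and pos: "measure coin (cyl s - S) > 0"
    and p: "0 < p" "p < 1" and ws: "w (- S) s < p"
  shows "\<exists>u. prefix s u \<and> length s < length u \<and> p \<le> w (- S) u \<and> w (- S) u \<le> 2 * p \<and>
     (\<forall>n. length s \<le> n \<and> n < length u \<longrightarrow> w (- S) (take n u) < p)"
proof -
  let ?T = "- S"
  have Tm: "?T \<in> sets coin" using S by auto
  obtain N where N: "N \<in> null_sets coin" "?T - dens ?T \<subseteq> N" using lebesgue_density[OF Tm] by blast
  have "cyl s \<inter> ?T = cyl s - S" by auto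
  hence "\<exists>y\<in>cyl s \<inter> ?T. y \<notin> N" using pos N(1) Tm S by (intro pos_not_null) auto
  then obtain y where y: "y \<in> cyl s" "y \<in> ?T" "y \<notin> N" by blast
  hence "y \<in> dens ?T" using N(2) by blast
  hence lim: "(\<lambda>n. w ?T (restr y n)) \<longlonglongrightarrow> 1" by (simp add: dens_def)
  then obtain N0 where N0: "\<forall>n\<ge>N0. norm (w ?T (restr y n) - 1) < 1 - p" using p by (auto dest!: LIMSEQ_D[of _ _ "1 - p"])
  define n1 where "n1 = max N0 (length s)"
  have "w ?T (restr y n1) \<ge> p" using N0[rule_format, of n1] by (simp add: n1_def abs_if split: if_splits)
  hence ex: "\<exists>n. length s \<le> n \<and> w ?T (restr y n) \<ge> p" by (intro exI[of _ n1]) (simp add: n1_def)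
  define n0 where "n0 = (LEAST n. length s \<le> n \<and> w ?T (restr y n) \<ge> p)"
  have n0: "length s \<le> n0" "w ?T (restr y n0) \<ge> p" using LeastI_ex[OF ex] by (simp_all add: n0_def)
  have min: "\<And>n. length s \<le> n \<Longrightarrow> n < n0 \<Longrightarrow> w ?T (restr y n) < p"
    using not_less_Least[of _ "\<lambda>n. length s \<le> n \<and> w ?T (restr y n) \<ge> p"] unfolding n0_def[symmetric]
    by (meson not_le)
  have rs: "restr y (length s) = s" using y(1) by (simp add: mem_cyl_iff)
  have "n0 \<noteq> length s" using n0(2) ws rs by auto
  then obtain m where m: "n0 = Suc m" "length s \<le> m" using n0(1) by (cases n0) auto
  have "w ?T (restr y m) < p" using min[of m] m by simp
  moreover have "w ?T (restr y n0) \<le> 2 * w ?T (restr y m)"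
    unfolding m(1) restr_Suc by (rule w_double[OF Tm])
  ultimately have up: "w ?T (restr y n0) \<le> 2 * p" by simp
  have pre: "prefix s (restr y n0)"
    using take_restr[OF n0(1), of y] rs by (metis prefix_def append_take_drop_id)
  show ?thesis
  proof (intro exI conjI allI impI)
    show "prefix s (restr y n0)" by (rule pre)
    show "length s < length (restr y n0)" using m by simp
    show "p \<le> w ?T (restr y n0)" by (rule n0(2))
    show "w ?T (restr y n0) \<le> 2 * p" by (rule up)
    fix n assume "length s \<le> n \<and> n < length (restr y n0)"
    thus "w ?T (take n (restr y n0)) < p" using min by (simp add: take_restr)
  qed
qed

lemma climb_exists:
  assumes S: "S \<in> sets coin" and l: "0 < l" "l \<le> 1" and wt: "w (- S) t \<le> l / 4" and q: "q > 0"
  shows "\<exists>u. prefix t u \<and> length t < length u \<and> w (- S) u \<le> q \<and>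
     (\<forall>n. length t \<le> n \<and> n \<le> length u \<longrightarrow> w (- S) (take n u) \<le> l)"
proof -
  let ?T = "- S"
  have Tm: "?T \<in> sets coin" using S by auto
  let ?B = "badinf ?T l t"
  have "l * measure coin ?B \<le> measure coin (?T \<inter> cyl t)" by (rule maxineq[OF Tm l(1)])
  also have "measure coin (?T \<inter> cyl t) = w ?T t * measure coin (cyl t)"
    using cyl_meas_pos[of t] by (simp add: w_def)
  also have "\<dots> \<le> l / 4 * measure coin (cyl t)"
    using wt by (intro mult_right_mono) auto
  finally have Bm: "measure coin ?B \<le> measure coin (cyl t) / 4" using l by (simp add: field_simps)
  have "measure coin (S \<inter> cyl t) = w S t * measure coin (cyl t)"
    using cyl_meas_pos[of t] by (simp add: w_def)
  moreover have "w S t = 1 - w ?T t" using w_compl[OF S, of t] by simp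
  moreover have "w ?T t * measure coin (cyl t) \<le> 1/4 * measure coin (cyl t)"
    using wt l cyl_meas_pos[of t] by (intro mult_right_mono) auto
  ultimately have Sm: "measure coin (S \<inter> cyl t) \<ge> 3/4 * measure coin (cyl t)"
    by (simp add: algebra_simps)
  have "measure coin (S \<inter> cyl t) \<le> measure coin ((S \<inter> cyl t - ?B) \<union> ?B)"
    using S by (intro coinP.finite_measure_mono) auto
  also have "\<dots> \<le> measure coin (S \<inter> cyl t - ?B) + measure coin ?B"
    using S by (intro measure_subadditive) auto
  finally have pos: "measure coin (S \<inter> cyl t - ?B) > 0"
    using Sm Bm cyl_meas_pos[of t] by linarith
  obtain N where N: "N \<in> null_sets coin" "S - dens S \<subseteq> N" using lebesgue_density[OF S] by blast
  obtain y where y: "y \<in> S \<inter> cyl t - ?B" "y \<notin> N"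
    using pos_not_null[OF _ pos N(1)] S by auto
  have yd: "y \<in> dens S" using y N(2) by blast
  hence lim: "(\<lambda>n. w ?T (restr y n)) \<longlonglongrightarrow> 0" using dens_iff_compl[OF S] by simp
  then obtain N0 where N0: "\<forall>n\<ge>N0. norm (w ?T (restr y n) - 0) < q" using q by (auto dest!: LIMSEQ_D[of _ _ q])
  define n where "n = max N0 (Suc (length t))"
  have wn: "w ?T (restr y n) \<le> q" using N0[rule_format, of n] w_nonneg[of ?T] by (simp add: n_def)
  have nb: "\<forall>k\<ge>length t. w ?T (restr y k) \<le> l" using y(1) by (auto simp: badinf_def not_less)
  have rt: "restr y (length t) = t" using y(1) by (simp add: mem_cyl_iff)
  have lt: "length t \<le> n" by (simp add: n_def)
  show ?thesis
  proof (intro exI conjI allI impI)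
    show "prefix t (restr y n)" using take_restr[OF lt, of y] rt by (metis prefix_def append_take_drop_id)
    show "length t < length (restr y n)" by (simp add: n_def)
    show "w ?T (restr y n) \<le> q" by (rule wn)
    fix k assume "length t \<le> k \<and> k \<le> length (restr y n)"
    thus "w ?T (take k (restr y n)) \<le> l" using nb by (simp add: take_restr)
  qed
qed


definition GG :: "(nat \<Rightarrow> nat \<Rightarrow> (nat\<Rightarrow>bool) set) \<Rightarrow> nat \<Rightarrow> nat \<Rightarrow> (nat\<Rightarrow>bool) set" where
  "GG F m n = (\<Union>j\<le>n. F m j)"

definition cc :: "(nat \<Rightarrow> nat \<Rightarrow> (nat\<Rightarrow>bool) set) \<Rightarrow> nat \<Rightarrow> (nat\<Rightarrow>bool) \<Rightarrow> nat \<Rightarrow> nat" where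
  "cc F m x k = (if \<exists>n\<le>k. cyl (restr x k) \<inter> GG F m n \<noteq> {}
     then LEAST n. cyl (restr x k) \<inter> GG F m n \<noteq> {} else Suc k)"

definition ch :: "(nat \<Rightarrow> nat \<Rightarrow> (nat\<Rightarrow>bool) set) \<Rightarrow> nat \<Rightarrow> (nat\<Rightarrow>bool) \<Rightarrow> nat \<Rightarrow> bool" where
  "ch F m x t \<longleftrightarrow> cc F m x (Suc t) \<noteq> cc F m x t"

lemma cc_le: "cc F m x k \<le> Suc k"
proof (cases "\<exists>n\<le>k. cyl (restr x k) \<inter> GG F m n \<noteq> {}")
  case True
  then obtain n where "n \<le> k" "cyl (restr x k) \<inter> GG F m n \<noteq> {}" by blast
  hence "(LEAST n. cyl (restr x k) \<inter> GG F m n \<noteq> {}) \<le> n" by (intro Least_le)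
  thus ?thesis using True \<open>n \<le> k\<close> by (simp add: cc_def)
qed (auto simp: cc_def)

lemma cc_dep: "restr x k = restr y k \<Longrightarrow> cc F m x k = cc F m y k"
  unfolding cc_def by (simp only:)

lemma cc_mono: "cc F m x k \<le> cc F m x (Suc k)"
proof (cases "\<exists>n\<le>Suc k. cyl (restr x (Suc k)) \<inter> GG F m n \<noteq> {}")
  case True
  define n' where "n' = (LEAST n. cyl (restr x (Suc k)) \<inter> GG F m n \<noteq> {})"
  have eq: "cc F m x (Suc k) = n'" using True by (simp add: cc_def n'_def)
  have P: "cyl (restr x (Suc k)) \<inter> GG F m n' \<noteq> {}" using True unfolding n'_def by (metis (mono_tags) LeastI)
  have n'le: "n' \<le> Suc k" using True unfolding n'_def by (meson Least_le order_trans)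
  have P2: "cyl (restr x k) \<inter> GG F m n' \<noteq> {}" using P cyl_restr_mono[of k "Suc k" x] by auto
  show ?thesis
  proof (cases "n' \<le> k")
    case True
    hence ex: "\<exists>n\<le>k. cyl (restr x k) \<inter> GG F m n \<noteq> {}" using P2 by blast
    have "(LEAST n. cyl (restr x k) \<inter> GG F m n \<noteq> {}) \<le> n'" using P2 by (rule Least_le)
    thus ?thesis using ex eq by (simp add: cc_def)
  next
    case False
    hence "n' = Suc k" using n'le by simp
    thus ?thesis using eq cc_le[of F m x k] by simp
  qed
next
  case False
  hence "cc F m x (Suc k) = Suc (Suc k)" unfolding cc_def by auto
  thus ?thesis using cc_le[of F m x k] by simp
qed

lemma cc_mono': "k \<le> k' \<Longrightarrow> cc F m x k \<le> cc F m x k'"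
  by (rule lift_Suc_mono_le[of "cc F m x"]) (auto intro: cc_mono)

lemma cc_bounded: "x \<in> F m j \<Longrightarrow> cc F m x k \<le> j"
proof (cases "j \<le> k")
  case True
  assume x: "x \<in> F m j"
  have "x \<in> cyl (restr x k) \<inter> GG F m j" using x by (auto simp: GG_def)
  hence P: "cyl (restr x k) \<inter> GG F m j \<noteq> {}" by blast
  hence ex: "\<exists>n\<le>k. cyl (restr x k) \<inter> GG F m n \<noteq> {}" using True by blast
  have "(LEAST n. cyl (restr x k) \<inter> GG F m n \<noteq> {}) \<le> j" using P by (rule Least_le)
  thus ?thesis using ex by (simp add: cc_def)
next
  case False
  thus ?thesis using cc_le[of F m x k] by simp
qed

lemma cc_unbounded:
  assumes cl: "\<And>j. closed (F m j)" and x: "\<And>j. x \<notin> F m j"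
  shows "\<exists>k. cc F m x k > B"
proof -
  have "closed (GG F m B)" unfolding GG_def using cl by (intro closed_UN) auto
  moreover have "x \<notin> GG F m B" using x by (auto simp: GG_def)
  ultimately obtain k0 where k0: "cyl (restr x k0) \<subseteq> - GG F m B"
    using open_nbhd_cyl[of "- GG F m B" x] by (auto simp: open_Compl)
  define k where "k = max k0 B"
  have sub: "cyl (restr x k) \<subseteq> - GG F m B" using k0 cyl_restr_mono[of k0 k x] by (auto simp: k_def)
  have "GG F m n \<subseteq> GG F m B" if "n \<le> B" for n unfolding GG_def using that by (intro UN_mono) auto
  hence none: "cyl (restr x k) \<inter> GG F m n = {}" if "n \<le> B" for n using sub that by blast
  show ?thesis
  proof (cases "\<exists>n\<le>k. cyl (restr x k) \<inter> GG F m n \<noteq> {}")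
    case True
    hence P: "cyl (restr x k) \<inter> GG F m (LEAST n. cyl (restr x k) \<inter> GG F m n \<noteq> {}) \<noteq> {}"
      by (metis (mono_tags) LeastI)
    hence "(LEAST n. cyl (restr x k) \<inter> GG F m n \<noteq> {}) > B" using none by (meson not_le)
    thus ?thesis using True by (intro exI[of _ k]) (simp add: cc_def)
  next
    case False
    hence "cc F m x k = Suc k" unfolding cc_def by auto
    thus ?thesis by (intro exI[of _ k]) (simp add: k_def)
  qed
qed

lemma card_ch_le: "card {t. t < k \<and> ch F m x t} \<le> cc F m x k"
proof (induction k)
  case 0 show ?case by simp
next
  case (Suc k)
  show ?case
  proof (cases "ch F m x k")
    case True
    hence "{t. t < Suc k \<and> ch F m x t} = insert k {t. t < k \<and> ch F m x t}" by (auto simp: less_Suc_eq)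
    hence "card {t. t < Suc k \<and> ch F m x t} = Suc (card {t. t < k \<and> ch F m x t})" by simp
    moreover have "cc F m x k < cc F m x (Suc k)" using True cc_mono[of F m x k] by (simp add: ch_def)
    ultimately show ?thesis using Suc.IH by simp
  next
    case False
    hence "{t. t < Suc k \<and> ch F m x t} = {t. t < k \<and> ch F m x t}" by (auto simp: less_Suc_eq)
    thus ?thesis using Suc.IH cc_mono[of F m x k] by simp
  qed
qed

lemma mem_iff_finite:
  assumes cl: "\<And>j. closed (F m j)"
  shows "(\<exists>j. x \<in> F m j) \<longleftrightarrow> finite {t. ch F m x t}"
proof
  assume "\<exists>j. x \<in> F m j"
  then obtain j where j: "x \<in> F m j" by blast
  show "finite {t. ch F m x t}"
  proof (rule ccontr)
    assume "infinite {t. ch F m x t}"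
    then obtain X where X: "finite X" "card X = Suc j" "X \<subseteq> {t. ch F m x t}"
      using infinite_arbitrarily_large by blast
    have "X \<noteq> {}" using X(2) by auto
    hence "X \<subseteq> {t. t < Suc (Max X) \<and> ch F m x t}" using X by (auto simp: less_Suc_eq_le)
    hence "card X \<le> card {t. t < Suc (Max X) \<and> ch F m x t}" by (intro card_mono) auto
    also have "\<dots> \<le> cc F m x (Suc (Max X))" by (fact card_ch_le)
    also have "\<dots> \<le> j" using cc_bounded[of x F m j] j by blast
    finally show False using X(2) by simp
  qed
next
  assume fin: "finite {t. ch F m x t}"
  show "\<exists>j. x \<in> F m j"
  proof (rule ccontr)
    assume "\<not> (\<exists>j. x \<in> F m j)"
    hence nx: "\<And>j. x \<notin> F m j" by blast
    obtain T where T: "\<forall>t\<in>{t. ch F m x t}. t < T" using fin finite_nat_set_iff_bounded by blast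
    have const: "cc F m x (T + d) = cc F m x T" for d
    proof (induction d)
      case (Suc d)
      have "\<not> ch F m x (T + d)" using T by auto
      thus ?case using Suc.IH by (simp add: ch_def)
    qed simp
    have bnd: "cc F m x k \<le> cc F m x T" for k
    proof (cases "k \<le> T")
      case True thus ?thesis by (rule cc_mono')
    next
      case False
      then obtain d where "k = T + d" by (metis le_add_diff_inverse nat_le_linear)
      thus ?thesis using const by simp
    qed
    obtain k where "cc F m x k > cc F m x T" using cc_unbounded[of F m x "cc F m x T", OF cl nx] by blast
    thus False using bnd[of k] by simp
  qed
qed


lemma prefix_take: "prefix a b \<Longrightarrow> n \<le> length a \<Longrightarrow> take n b = take n a"
  by (auto simp: prefix_def)

lemma prefix_take_len: "prefix a b \<Longrightarrow> take (length a) b = a"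
  by (auto simp: prefix_def)

definition qq :: "nat \<Rightarrow> real" where "qq k = (1/2)^(k+4)"

definition plainst :: "(nat \<Rightarrow> bool) set \<Rightarrow> nat \<Rightarrow> bool list \<Rightarrow> bool list" where
  "plainst S k s = (SOME u. prefix s u \<and> length s < length u \<and> w (-S) u \<le> qq (Suc k) \<and>
      (\<forall>n. length s \<le> n \<and> n \<le> length u \<longrightarrow> w (-S) (take n u) \<le> 4 * qq k))"

definition dipst :: "(nat \<Rightarrow> bool) set \<Rightarrow> nat \<Rightarrow> nat \<Rightarrow> bool list \<Rightarrow> bool list" where
  "dipst S k m s = (SOME u. prefix s u \<and> length s < length u \<and> w (-S) u \<le> qq (Suc k) \<and>
      (\<forall>n. length s \<le> n \<and> n \<le> length u \<longrightarrow> w (-S) (take n u) \<le> (1/2)^m) \<and>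
      (\<exists>n. length s < n \<and> n \<le> length u \<and> (1/2)^(m+3) \<le> w (-S) (take n u)))"

lemma plain_ok:
  assumes S: "S \<in> sets coin" and ws: "w (-S) s \<le> qq k"
  shows "prefix s (plainst S k s) \<and> length s < length (plainst S k s) \<and> w (-S) (plainst S k s) \<le> qq (Suc k) \<and>
      (\<forall>n. length s \<le> n \<and> n \<le> length (plainst S k s) \<longrightarrow> w (-S) (take n (plainst S k s)) \<le> 4 * qq k)"
proof -
  have "(1/2::real)^k \<le> 1" by (simp add: power_le_one)
  hence "4 * qq k \<le> 1" by (simp add: qq_def power_add eval_nat_numeral)
  moreover have "0 < 4 * qq k" "0 < qq (Suc k)" by (simp_all add: qq_def)
  ultimately have "\<exists>u. prefix s u \<and> length s < length u \<and> w (-S) u \<le> qq (Suc k) \<and>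
      (\<forall>n. length s \<le> n \<and> n \<le> length u \<longrightarrow> w (-S) (take n u) \<le> 4 * qq k)"
    using ws by (intro climb_exists[OF S]) auto
  thus ?thesis unfolding plainst_def by (rule someI_ex)
qed

lemma dip_ok:
  assumes S: "S \<in> sets coin" and pos: "\<And>s. measure coin (cyl s - S) > 0"
    and mk: "m \<le> k" and ws: "w (-S) s \<le> qq k"
  shows "prefix s (dipst S k m s) \<and> length s < length (dipst S k m s) \<and> w (-S) (dipst S k m s) \<le> qq (Suc k) \<and>
      (\<forall>n. length s \<le> n \<and> n \<le> length (dipst S k m s) \<longrightarrow> w (-S) (take n (dipst S k m s)) \<le> (1/2)^m) \<and>
      (\<exists>n. length s < n \<and> n \<le> length (dipst S k m s) \<and> (1/2)^(m+3) \<le> w (-S) (take n (dipst S k m s)))"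
proof -
  define p :: real where "p = (1/2)^(m+3)"
  have "(1/2::real)^m \<le> 1" by (simp add: power_le_one)
  hence p: "0 < p" "p < 1" by (simp_all add: p_def power_add eval_nat_numeral)
  have "qq k \<le> (1/2)^(m+4)" unfolding qq_def by (rule power_decreasing) (use mk in auto)
  also have "(1/2::real)^(m+4) < p" by (simp add: p_def power_add)
  finally have wsp: "w (-S) s < p" using ws by simp
  obtain u1 where u1: "prefix s u1" "length s < length u1" "p \<le> w (- S) u1" "w (- S) u1 \<le> 2 * p"
     "\<forall>n. length s \<le> n \<and> n < length u1 \<longrightarrow> w (- S) (take n u1) < p"
    using dip_exists[OF S pos p wsp] by blast
  define l :: real where "l = (1/2)^m"
  have l: "0 < l" "l \<le> 1" by (simp_all add: l_def power_le_one)
  have pl: "2 * p = l / 4" "p \<le> l" by (simp_all add: p_def l_def power_add eval_nat_numeral)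
  have "\<exists>u. prefix u1 u \<and> length u1 < length u \<and> w (- S) u \<le> qq (Suc k) \<and>
     (\<forall>n. length u1 \<le> n \<and> n \<le> length u \<longrightarrow> w (- S) (take n u) \<le> l)"
    using u1(4) pl by (intro climb_exists[OF S l]) (auto simp: qq_def)
  then obtain u2 where u2: "prefix u1 u2" "length u1 < length u2" "w (- S) u2 \<le> qq (Suc k)"
     "\<forall>n. length u1 \<le> n \<and> n \<le> length u2 \<longrightarrow> w (- S) (take n u2) \<le> l" by blast
  have "prefix s u2 \<and> length s < length u2 \<and> w (-S) u2 \<le> qq (Suc k) \<and>
      (\<forall>n. length s \<le> n \<and> n \<le> length u2 \<longrightarrow> w (-S) (take n u2) \<le> (1/2)^m) \<and>
      (\<exists>n. length s < n \<and> n \<le> length u2 \<and> (1/2)^(m+3) \<le> w (-S) (take n u2))"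
  proof (intro conjI allI impI)
    show "prefix s u2" using u1(1) u2(1) by (rule prefix_order.order_trans)
    show "length s < length u2" using u1(2) u2(2) by simp
    show "w (-S) u2 \<le> qq (Suc k)" by (rule u2(3))
    fix n assume n: "length s \<le> n \<and> n \<le> length u2"
    show "w (-S) (take n u2) \<le> (1/2)^m"
    proof (cases "n \<le> length u1")
      case True
      hence tk: "take n u2 = take n u1" using u2(1) by (rule prefix_take[rotated])
      show ?thesis
      proof (cases "n = length u1")
        case True
        thus ?thesis using tk u1(4) pl l_def by simp
      next
        case False
        hence "w (-S) (take n u1) < p" using u1(5) n \<open>n \<le> length u1\<close> by simp
        thus ?thesis using tk pl l_def by simp
      qed
    next
      case False
      thus ?thesis using u2(4) n l_def by simp
    qed
  next
    show "\<exists>n. length s < n \<and> n \<le> length u2 \<and> (1/2)^(m+3) \<le> w (-S) (take n u2)"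
      using u1(2,3) u2(2) prefix_take_len[OF u2(1)] by (intro exI[of _ "length u1"]) (simp add: p_def)
  qed
  hence "\<exists>u. prefix s u \<and> length s < length u \<and> w (-S) u \<le> qq (Suc k) \<and>
      (\<forall>n. length s \<le> n \<and> n \<le> length u \<longrightarrow> w (-S) (take n u) \<le> (1/2)^m) \<and>
      (\<exists>n. length s < n \<and> n \<le> length u \<and> (1/2)^(m+3) \<le> w (-S) (take n u))" by blast
  thus ?thesis unfolding dipst_def by (rule someI_ex)
qed


definition stepst :: "(nat \<Rightarrow> bool) set \<Rightarrow> (nat \<Rightarrow> nat \<Rightarrow> (nat\<Rightarrow>bool) set) \<Rightarrow> (nat \<Rightarrow> bool) \<Rightarrow> nat \<Rightarrow> bool list \<Rightarrow> bool list" where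
  "stepst S F x k s = (if ch F (fst (prod_decode k)) x (snd (prod_decode k))
     then dipst S k (fst (prod_decode k)) s else plainst S k s)"

primrec seqst :: "(nat \<Rightarrow> bool) set \<Rightarrow> (nat \<Rightarrow> nat \<Rightarrow> (nat\<Rightarrow>bool) set) \<Rightarrow> bool list \<Rightarrow> (nat \<Rightarrow> bool) \<Rightarrow> nat \<Rightarrow> bool list" where
  "seqst S F s0 x 0 = s0"
| "seqst S F s0 x (Suc k) = stepst S F x k (seqst S F s0 x k)"

definition fred :: "(nat \<Rightarrow> bool) set \<Rightarrow> (nat \<Rightarrow> nat \<Rightarrow> (nat\<Rightarrow>bool) set) \<Rightarrow> bool list \<Rightarrow> (nat \<Rightarrow> bool) \<Rightarrow> (nat \<Rightarrow> bool)" where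
  "fred S F s0 x i = seqst S F s0 x (Suc i) ! i"

lemma ch_dep: "restr x (Suc t) = restr y (Suc t) \<Longrightarrow> ch F m x t = ch F m y t"
proof -
  assume h: "restr x (Suc t) = restr y (Suc t)"
  hence "restr x t = restr y t" by (metis take_restr le_SucI order_refl)
  thus ?thesis using h by (simp add: ch_def cc_dep[of x _ y])
qed

lemma seq_dep: "restr x k = restr y k \<Longrightarrow> seqst S F s0 x k = seqst S F s0 y k"
proof (induction k)
  case 0 thus ?case by simp
next
  case (Suc k)
  have "restr x k = restr y k" using Suc.prems by (metis take_restr le_SucI order_refl)
  hence IH: "seqst S F s0 x k = seqst S F s0 y k" by (rule Suc.IH)
  define t where "t = snd (prod_decode k)"
  have "t \<le> k" unfolding t_def by (metis le_prod_encode_2 prod.collapse prod_decode_inverse)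
  hence "restr x (Suc t) = restr y (Suc t)" using Suc.prems by (metis take_restr Suc_le_mono)
  hence "ch F m x t = ch F m y t" for m by (rule ch_dep)
  thus ?case using IH by (simp add: stepst_def t_def)
qed

lemma fst_decode_le: "fst (prod_decode k) \<le> k"
  by (metis le_prod_encode_1 prod.collapse prod_decode_inverse)

lemma nat_seq_locate:
  fixes L :: "nat \<Rightarrow> nat"
  assumes inc: "\<And>k. L k < L (Suc k)" and big: "\<And>k. k \<le> L k" and n: "L K0 \<le> n"
  shows "\<exists>k\<ge>K0. L k \<le> n \<and> n < L (Suc k)"
proof -
  have ex: "\<exists>j. n < L j" using big[of "Suc n"] by (intro exI[of _ "Suc n"]) simp
  define k' where "k' = (LEAST j. n < L j)"
  have k': "n < L k'" using LeastI_ex[OF ex] by (simp add: k'_def)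
  have mono: "j \<le> j' \<Longrightarrow> L j \<le> L j'" for j j' by (rule lift_Suc_mono_le[of L]) (auto intro: less_imp_le inc)
  have "k' > K0"
  proof (rule ccontr)
    assume "\<not> K0 < k'"
    hence "L k' \<le> L K0" by (intro mono) simp
    thus False using n k' by simp
  qed
  then obtain k where k: "k' = Suc k" "k \<ge> K0" by (cases k') auto
  have "\<not> n < L k" using not_less_Least[of k "\<lambda>j. n < L j"] k by (simp add: k'_def)
  thus ?thesis using k k' by (intro exI[of _ k]) auto
qed

locale constr =
  fixes S :: "(nat \<Rightarrow> bool) set" and F :: "nat \<Rightarrow> nat \<Rightarrow> (nat\<Rightarrow>bool) set" and s0 :: "bool list"
  assumes S: "S \<in> sets coin" and pos: "\<And>s. measure coin (cyl s - S) > 0"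
    and s0: "w (-S) s0 \<le> qq 0" and cl: "\<And>m n. closed (F m n)"
begin

abbreviation "sq x k \<equiv> seqst S F s0 x k"

lemma inv: "w (-S) (sq x k) \<le> qq k"
proof (induction k)
  case 0 thus ?case using s0 by simp
next
  case (Suc k)
  show ?case
  proof (cases "ch F (fst (prod_decode k)) x (snd (prod_decode k))")
    case True
    thus ?thesis using dip_ok[OF S pos fst_decode_le Suc.IH] by (simp add: stepst_def)
  next
    case False
    thus ?thesis using plain_ok[OF S Suc.IH] by (simp add: stepst_def)
  qed
qed

lemma step:
  fixes k :: nat and x :: "nat \<Rightarrow> bool"
  defines "m \<equiv> fst (prod_decode k)" and "t \<equiv> snd (prod_decode k)"
  shows "prefix (sq x k) (sq x (Suc k)) \<and> length (sq x k) < length (sq x (Suc k)) \<and>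
     (\<forall>n. length (sq x k) \<le> n \<and> n \<le> length (sq x (Suc k)) \<longrightarrow>
        w (-S) (take n (sq x (Suc k))) \<le> (if ch F m x t then (1/2)^m else 4 * qq k)) \<and>
     (ch F m x t \<longrightarrow> (\<exists>n. length (sq x k) < n \<and> n \<le> length (sq x (Suc k)) \<and>
        (1/2)^(m+3) \<le> w (-S) (take n (sq x (Suc k)))))"
proof (cases "ch F m x t")
  case True
  have iv: "w (-S) (sq x k) \<le> qq k" by (rule inv)
  show ?thesis using True dip_ok[OF S pos fst_decode_le[of k] iv] by (simp add: stepst_def m_def t_def)
next
  case False
  have iv: "w (-S) (sq x k) \<le> qq k" by (rule inv)
  show ?thesis using False plain_ok[OF S iv] by (simp add: stepst_def m_def t_def)
qed

lemma len_inc: "length (sq x k) < length (sq x (Suc k))"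
  using step by blast

lemma len_big: "k \<le> length (sq x k)"
proof (induction k)
  case (Suc k) thus ?case using len_inc[of x k] by simp
qed simp

lemma sq_prefix: "j \<le> k \<Longrightarrow> prefix (sq x j) (sq x k)"
proof (induction k)
  case 0 thus ?case by simp
next
  case (Suc k)
  show ?case
  proof (cases "j = Suc k")
    case False
    hence "prefix (sq x j) (sq x k)" using Suc by simp
    thus ?thesis using step[of x k] prefix_order.order_trans by blast
  qed simp
qed

lemma prefix_nth: "prefix a b \<Longrightarrow> i < length a \<Longrightarrow> a ! i = b ! i"
  by (auto simp: prefix_def nth_append)

lemma fred_restr: "restr (fred S F s0 x) (length (sq x k)) = sq x k"
proof (rule nth_equalityI)
  fix i assume "i < length (restr (fred S F s0 x) (length (sq x k)))"
  hence i: "i < length (sq x k)" by simp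
  have li: "i < length (sq x (Suc i))" using len_big[of "Suc i" x] by simp
  have "sq x (Suc i) ! i = sq x k ! i"
  proof (cases "Suc i \<le> k")
    case True thus ?thesis using prefix_nth[OF sq_prefix[OF True] li] by simp
  next
    case False
    hence ki: "k \<le> Suc i" by simp
    show ?thesis using prefix_nth[OF sq_prefix[OF ki, of x] i] by (rule sym)
  qed
  thus "restr (fred S F s0 x) (length (sq x k)) ! i = sq x k ! i" using i by (simp add: fred_def)
qed simp

lemma restr_fred_take: "n \<le> length (sq x k) \<Longrightarrow> restr (fred S F s0 x) n = take n (sq x k)"
  by (metis fred_restr take_restr)

lemma fred_cont: "continuous_on UNIV (fred S F s0)"
proof (rule continuous_on_coordinatewise_then_product)
  fix i
  define ext :: "bool list \<Rightarrow> nat \<Rightarrow> bool" where "ext u = (\<lambda>j. if j < length u then u ! j else False)" for u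
  have re: "restr (ext (restr x n)) n = restr x n" for x n by (simp add: ext_def restr_def)
  define h where "h u = sq (ext u) (Suc i) ! i" for u
  have eq: "fred S F s0 x i = h (restr x (Suc i))" for x
    using seq_dep[OF re[symmetric, of x "Suc i"]] by (simp add: h_def fred_def)
  show "continuous_on UNIV (\<lambda>x. fred S F s0 x i)"
  proof (subst continuous_on_open_vimage[OF open_UNIV], intro allI impI)
    fix B :: "bool set" assume "open B"
    have "(\<lambda>x. fred S F s0 x i) -` B \<inter> UNIV = {x. restr x (Suc i) \<in> {u. h u \<in> B}}" by (simp add: eq vimage_def)
    thus "open ((\<lambda>x. fred S F s0 x i) -` B \<inter> UNIV)" using open_det[of "Suc i" "{u. h u \<in> B}"] by simp
  qed
qed

lemma fred_red: "x \<in> (\<Inter>m. \<Union>n. F m n) \<longleftrightarrow> fred S F s0 x \<in> dens S"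
proof
  let ?y = "fred S F s0 x"
  assume x: "x \<in> (\<Inter>m. \<Union>n. F m n)"
  have fin: "finite {t. ch F m x t}" for m using x mem_iff_finite[of F m x, OF cl] by blast
  have "(\<lambda>n. w (- S) (restr ?y n)) \<longlonglongrightarrow> 0"
  proof (rule LIMSEQ_I)
    fix r :: real assume r: "r > 0"
    obtain M where M: "(1/2::real)^M < r" using real_arch_pow_inv[OF r, of "1/2"] by auto
    define Kb where "Kb = {k. fst (prod_decode k) < M \<and> ch F (fst (prod_decode k)) x (snd (prod_decode k))}"
    have "Kb \<subseteq> prod_encode ` (\<Union>m<M. {m} \<times> {t. ch F m x t})"
    proof
      fix k assume k: "k \<in> Kb"
      have "k = prod_encode (fst (prod_decode k), snd (prod_decode k))" by simp
      thus "k \<in> prod_encode ` (\<Union>m<M. {m} \<times> {t. ch F m x t})" using k unfolding Kb_def by blast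
    qed
    moreover have "finite (prod_encode ` (\<Union>m<M. {m} \<times> {t. ch F m x t}))" using fin by auto
    ultimately have "finite Kb" by (rule finite_subset)
    then obtain K1 where K1: "\<forall>k\<in>Kb. k < K1" using finite_nat_set_iff_bounded by blast
    define K0 where "K0 = max K1 M"
    have "\<forall>n\<ge>length (sq x K0). norm (w (- S) (restr ?y n) - 0) < r"
    proof (intro allI impI)
      fix n assume n: "n \<ge> length (sq x K0)"
      obtain k where k: "k \<ge> K0" "length (sq x k) \<le> n" "n < length (sq x (Suc k))"
        using nat_seq_locate[of "\<lambda>k. length (sq x k)", OF len_inc len_big n] by blast
      have ry: "restr ?y n = take n (sq x (Suc k))" using k(3) by (intro restr_fred_take) simp
      define m where "m = fst (prod_decode k)"
      define t where "t = snd (prod_decode k)"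
      have bnd: "w (-S) (take n (sq x (Suc k))) \<le> (if ch F m x t then (1/2)^m else 4 * qq k)"
        using step[where k=k and x=x] k(2,3) unfolding m_def t_def by auto
      have "(if ch F m x t then (1/2)^m else 4 * qq k) \<le> (1/2::real)^M"
      proof (cases "ch F m x t")
        case True
        hence "k \<notin> Kb \<Longrightarrow> M \<le> m" by (auto simp: Kb_def m_def t_def)
        moreover have "k \<notin> Kb" using K1 k(1) by (auto simp: K0_def)
        ultimately have "(1/2::real)^m \<le> (1/2)^M" by (intro power_decreasing) auto
        thus ?thesis using True by simp
      next
        case False
        have "4 * qq k = (1/2::real)^(k+2)" by (simp add: qq_def power_add eval_nat_numeral)
        also have "\<dots> \<le> (1/2)^M" using k(1) by (intro power_decreasing) (auto simp: K0_def)
        finally show ?thesis using False by simp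
      qed
      hence "w (-S) (restr ?y n) < r" using bnd ry M by simp
      thus "norm (w (- S) (restr ?y n) - 0) < r" using w_nonneg[of "-S"] by simp
    qed
    thus "\<exists>no. \<forall>n\<ge>no. norm (w (- S) (restr ?y n) - 0) < r" by blast
  qed
  thus "?y \<in> dens S" using dens_iff_compl[OF S] by simp
next
  let ?y = "fred S F s0 x"
  assume y: "?y \<in> dens S"
  show "x \<in> (\<Inter>m. \<Union>n. F m n)"
  proof (rule ccontr)
    assume "x \<notin> (\<Inter>m. \<Union>n. F m n)"
    then obtain m where m: "\<not> (\<exists>j. x \<in> F m j)" by blast
    hence inf: "infinite {t. ch F m x t}" using mem_iff_finite[of F m x, OF cl] by blast
    have "(\<lambda>n. w (- S) (restr ?y n)) \<longlonglongrightarrow> 0" using y dens_iff_compl[OF S] by simp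
    then obtain N0 where N0: "\<forall>n\<ge>N0. norm (w (- S) (restr ?y n) - 0) < (1/2)^(m+3)"
      by (auto dest!: LIMSEQ_D[of _ _ "(1/2)^(m+3)"])
    obtain t where t: "t \<ge> N0" "ch F m x t" using inf unfolding infinite_nat_iff_unbounded_le by blast
    define k where "k = prod_encode (m, t)"
    have dk: "fst (prod_decode k) = m" "snd (prod_decode k) = t" by (simp_all add: k_def)
    have tk: "t \<le> k" unfolding k_def by (rule le_prod_encode_2)
    obtain n where n: "length (sq x k) < n" "n \<le> length (sq x (Suc k))"
      "(1/2)^(m+3) \<le> w (-S) (take n (sq x (Suc k)))"
      using step[where k=k and x=x] t(2) unfolding dk by blast
    have ry: "restr ?y n = take n (sq x (Suc k))" using n(2) by (rule restr_fred_take)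
    have "n \<ge> N0" using n(1) len_big[where k=k and x=x] tk t(1) by simp
    hence "w (- S) (restr ?y n) < (1/2)^(m+3)" using N0 w_nonneg[of "-S"] by auto
    thus False using n(3) ry by simp
  qed
qed

end

lemma closed_det': "closed {x. P (restr x n)}"
  using closed_det[of n "Collect P"] by simp

lemma dens_Pi03:
  assumes S: "S \<in> sets coin"
  shows "Pi03 (dens S)"
proof -
  define FF where "FF k N = {x. \<forall>n\<ge>N. 1 - inverse (real (Suc k)) \<le> w S (restr x n)}" for k N
  have cl: "closed (FF k N)" for k N
  proof -
    have "FF k N = (\<Inter>n\<in>{N..}. {x. restr x n \<in> {u. 1 - inverse (real (Suc k)) \<le> w S u}})"
      by (auto simp: FF_def)
    thus ?thesis using closed_det' by (auto intro!: closed_INT)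
  qed
  have "dens S = (\<Inter>k. \<Union>N. FF k N)"
  proof (intro equalityI subsetI)
    fix x assume "x \<in> dens S"
    hence lim: "(\<lambda>n. w S (restr x n)) \<longlonglongrightarrow> 1" by (simp add: dens_def)
    show "x \<in> (\<Inter>k. \<Union>N. FF k N)"
    proof
      fix k
      obtain N where "\<forall>n\<ge>N. norm (w S (restr x n) - 1) < inverse (real (Suc k))"
        using LIMSEQ_D[OF lim, of "inverse (real (Suc k))"] by auto
      hence "x \<in> FF k N" by (auto simp: FF_def abs_less_iff)
      thus "x \<in> (\<Union>N. FF k N)" by blast
    qed
  next
    fix x assume x: "x \<in> (\<Inter>k. \<Union>N. FF k N)"
    have "(\<lambda>n. w S (restr x n)) \<longlonglongrightarrow> 1"
    proof (rule LIMSEQ_I)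
      fix r :: real assume r: "r > 0"
      obtain k where k: "inverse (real (Suc k)) < r" using ex_inv_Suc r by blast
      obtain N0 where N0: "x \<in> FF k N0" using x by blast
      have "\<forall>n\<ge>N0. norm (w S (restr x n) - 1) < r"
      proof (intro allI impI)
        fix n assume "n \<ge> N0"
        hence "w S (restr x n) \<ge> 1 - inverse (real (Suc k))" using N0 by (simp add: FF_def)
        moreover have "w S (restr x n) \<le> 1" using w_le1[OF S] by blast
        ultimately have "\<bar>w S (restr x n) - 1\<bar> \<le> inverse (real (Suc k))" by linarith
        thus "norm (w S (restr x n) - 1) < r" using k by simp
      qed
      thus "\<exists>N0. \<forall>n\<ge>N0. norm (w S (restr x n) - 1) < r" by blast
    qed
    thus "x \<in> dens S" by (simp add: dens_def)
  qed
  thus ?thesis unfolding Pi03_def using cl by blast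
qed

lemma pos_from_interior:
  assumes S: "S \<in> sets coin" and int: "interior (dens S) = {}"
  shows "measure coin (cyl s - S) > 0"
proof (rule ccontr)
  assume "\<not> ?thesis"
  hence z: "measure coin (cyl s - S) = 0" using measure_nonneg[of coin "cyl s - S"] by linarith
  have "cyl s \<subseteq> dens S"
  proof
    fix y assume y: "y \<in> cyl s"
    have "w S (restr y n) = 1" if n: "n \<ge> length s" for n
    proof -
      have sub: "cyl (restr y n) \<subseteq> cyl s"
        using cyl_restr_mono[OF n, of y] y by (simp add: mem_cyl_iff)
      have "measure coin (cyl (restr y n) - S) \<le> measure coin (cyl s - S)"
        using sub S by (intro coinP.finite_measure_mono) auto
      hence z2: "measure coin (cyl (restr y n) - S) = 0" using z measure_nonneg[of coin "cyl (restr y n) - S"] by linarith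
      have "cyl (restr y n) - S = cyl (restr y n) - (S \<inter> cyl (restr y n))" by auto
      hence "measure coin (cyl (restr y n) - S) = measure coin (cyl (restr y n)) - measure coin (S \<inter> cyl (restr y n))"
        using S by (simp add: coinP.finite_measure_Diff)
      hence "measure coin (S \<inter> cyl (restr y n)) = measure coin (cyl (restr y n))" using z2 by simp
      thus ?thesis using cyl_meas_pos[of "restr y n"] by (simp add: w_def)
    qed
    hence "eventually (\<lambda>n. w S (restr y n) = 1) sequentially" by (auto simp: eventually_sequentially)
    hence "(\<lambda>n. w S (restr y n)) \<longlonglongrightarrow> 1" by (rule tendsto_eventually)
    thus "y \<in> dens S" by (simp add: dens_def)
  qed
  hence "cyl s \<subseteq> interior (dens S)" using open_cyl by (rule interior_maximal)
  thus False using int cyl_nonempty[of s] by auto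
qed

theorem theorem1p3:
  fixes A :: "(nat \<Rightarrow> bool) set"
  assumes "mu_measurable A"
    and "density_points A \<noteq> {}"
    and "interior (density_points A) = {}"
  shows "complete_Pi03 (density_points A)"
proof -
  obtain Sm Nn N' where dec: "A = Sm \<union> Nn" "Nn \<subseteq> N'" "N' \<in> null_sets coin" "Sm \<in> sets coin"
    using assms(1) unfolding mu_measurable_def by (rule sets_completionE)
  have Sm: "Sm \<in> sets coin" by (rule dec(4))
  have meq: "measure (completion coin) (A \<inter> cyl s) = measure coin (Sm \<inter> cyl s)" for s
  proof -
    have "A \<inter> cyl s = (Sm \<inter> cyl s) \<union> (Nn \<inter> cyl s)" using dec(1) by auto
    moreover have "Nn \<inter> cyl s \<in> null_sets (completion coin)"
    proof -
      have "Nn \<inter> cyl s \<subseteq> N'" using dec(2) by blast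
      thus ?thesis by (rule null_sets_completion_subset[OF _ null_sets_completionI[OF dec(3)]])
    qed
    moreover have "Sm \<inter> cyl s \<in> sets (completion coin)" using Sm by auto
    ultimately have "measure (completion coin) (A \<inter> cyl s) = measure (completion coin) (Sm \<inter> cyl s)"
      by (simp add: measure_Un_null_set)
    also have "\<dots> = measure coin (Sm \<inter> cyl s)" using Sm by simp
    finally show ?thesis .
  qed
  have mc: "measure (completion coin) (cyl s) = measure coin (cyl s)" for s by simp
  have dpeq: "density_points A = dens Sm"
    unfolding density_points_def dens_def w_def meq mc by (rule refl)
  have pos: "\<And>s. measure coin (cyl s - Sm) > 0"
    using pos_from_interior[OF Sm] assms(3) dpeq by simp
  obtain y0 where y0: "y0 \<in> dens Sm" using assms(2) dpeq by auto
  hence "(\<lambda>n. w (- Sm) (restr y0 n)) \<longlonglongrightarrow> 0" using dens_iff_compl[OF Sm] by simp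
  moreover have "qq 0 > 0" by (simp add: qq_def)
  ultimately obtain n0 where "norm (w (- Sm) (restr y0 n0) - 0) < qq 0"
    by (auto dest!: LIMSEQ_D[of _ _ "qq 0"])
  hence s0: "w (- Sm) (restr y0 n0) \<le> qq 0" using w_nonneg[of "- Sm"] by simp
  show ?thesis
    unfolding complete_Pi03_def dpeq
  proof (intro conjI allI impI)
    show "Pi03 (dens Sm)" by (rule dens_Pi03[OF Sm])
    fix Y assume "Pi03 Y"
    hence "\<exists>F :: nat \<Rightarrow> nat \<Rightarrow> (nat \<Rightarrow> bool) set. (\<forall>m n. closed (F m n)) \<and> Y = (\<Inter>m. \<Union>n. F m n)" by (simp only: Pi03_def)
    then obtain F :: "nat \<Rightarrow> nat \<Rightarrow> (nat \<Rightarrow> bool) set" where FF: "(\<forall>m n. closed (F m n)) \<and> Y = (\<Inter>m. \<Union>n. F m n)" ..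
    have F: "\<And>m n. closed (F m n)" "Y = (\<Inter>m. \<Union>n. F m n)" using FF by simp_all
    interpret constr Sm F "restr y0 n0"
    proof
      show "Sm \<in> sets coin" by (rule Sm)
      show "\<And>s. measure coin (cyl s - Sm) > 0" by (rule pos)
      show "w (- Sm) (restr y0 n0) \<le> qq 0" by (rule s0)
      show "\<And>m n. closed (F m n)" by (rule F(1))
    qed
    show "\<exists>f. continuous_on UNIV f \<and> Y = f -` dens Sm"
    proof (intro exI conjI)
      show "continuous_on UNIV (fred Sm F (restr y0 n0))" by (rule fred_cont)
      show "Y = fred Sm F (restr y0 n0) -` dens Sm"
      proof (intro equalityI subsetI)
        fix x assume "x \<in> Y" thus "x \<in> fred Sm F (restr y0 n0) -` dens Sm" using fred_red[of x] F(2) by simp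
      next
        fix x assume "x \<in> fred Sm F (restr y0 n0) -` dens Sm" thus "x \<in> Y" using fred_red[of x] F(2) by simp
      qed
    qed
  qed
qed

end
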